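(* Let $A$ and $N$ be disjoint countable inverse semigroups, with $A$ unital and amenable and $N$ not amenable. Let $S=A\sqcup N$ with multiplication extending those of $A$ and $N$ and with $an=n=na$ for all $a\in A$, $n\in N$. Then $S$ is an inverse semigroup which is not amenable but is domain measurable.
   Context: Inverse semigroup: each $s$ has a unique $s^*$ with $ss^*s=s$, $s^*ss^*=s^*$. A semigroup $T$ is amenable if there is a finitely additive probability measure $\mu$ on $T$ with $\mu(t^{-1}B)=\mu(B)$ for all $t\in T$, $B\subseteq T$, where $t^{-1}B=\{r\in T:tr\in B\}$. An inverse semigroup $S$ is domain measurable if there is a finitely additive $\mu\colon\mathcal P(S)\to[0,\infty]$ with $\mu(S)=1$ and $\mu(s^*sB)=\mu(sB)$ for all $s\in S$, $B\subseteq S$ (here $sB=\{sb:b\in B\}$). *)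

theory Defs
  imports "HOL-Library.Countable" "HOL-Library.Extended_Nonnegative_Real"
begin

definition inverse_semigroup :: "('a \<Rightarrow> 'a \<Rightarrow> 'a) \<Rightarrow> bool" where
  "inverse_semigroup m \<longleftrightarrow>
     (\<forall>x y z. m (m x y) z = m x (m y z)) \<and>
     (\<forall>s. \<exists>!t. m (m s t) s = s \<and> m (m t s) t = t)"

definition isg_inv :: "('a \<Rightarrow> 'a \<Rightarrow> 'a) \<Rightarrow> 'a \<Rightarrow> 'a" where
  "isg_inv m s = (THE t. m (m s t) s = s \<and> m (m t s) t = t)"

definition unital :: "('a \<Rightarrow> 'a \<Rightarrow> 'a) \<Rightarrow> bool" where
  "unital m \<longleftrightarrow> (\<exists>e. \<forall>a. m e a = a \<and> m a e = a)"

definition amenable :: "('a \<Rightarrow> 'a \<Rightarrow> 'a) \<Rightarrow> bool" where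
  "amenable m \<longleftrightarrow> (\<exists>\<mu> :: 'a set \<Rightarrow> real.
     (\<forall>B. 0 \<le> \<mu> B) \<and> \<mu> UNIV = 1 \<and>
     (\<forall>B C. B \<inter> C = {} \<longrightarrow> \<mu> (B \<union> C) = \<mu> B + \<mu> C) \<and>
     (\<forall>t B. \<mu> {r. m t r \<in> B} = \<mu> B))"

definition domain_measurable :: "('a \<Rightarrow> 'a \<Rightarrow> 'a) \<Rightarrow> bool" where
  "domain_measurable m \<longleftrightarrow> (\<exists>\<mu> :: 'a set \<Rightarrow> ennreal.
     \<mu> UNIV = 1 \<and>
     (\<forall>B C. B \<inter> C = {} \<longrightarrow> \<mu> (B \<union> C) = \<mu> B + \<mu> C) \<and>
     (\<forall>s B. \<mu> (m (m (isg_inv m s) s) ` B) = \<mu> (m s ` B)))"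

fun sum_mult :: "('a \<Rightarrow> 'a \<Rightarrow> 'a) \<Rightarrow> ('n \<Rightarrow> 'n \<Rightarrow> 'n) \<Rightarrow> 'a + 'n \<Rightarrow> 'a + 'n \<Rightarrow> 'a + 'n" where
  "sum_mult mA mN (Inl a) (Inl b) = Inl (mA a b)"
| "sum_mult mA mN (Inr x) (Inr y) = Inr (mN x y)"
| "sum_mult mA mN (Inl a) (Inr y) = Inr y"
| "sum_mult mA mN (Inr x) (Inl b) = Inr x"

end

theory Submission
  imports Defs
begin


lemma meas_restrict:
  fixes \<nu> :: "'a set \<Rightarrow> real"
  assumes nn: "\<forall>B. 0 \<le> \<nu> B" and u: "\<nu> UNIV = 1"
    and add: "\<forall>B C. B \<inter> C = {} \<longrightarrow> \<nu> (B \<union> C) = \<nu> B + \<nu> C"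
    and Y: "\<nu> Y = 1"
  shows "\<nu> X = \<nu> (X \<inter> Y)"
proof -
  have 1: "\<nu> (Y \<union> - Y) = \<nu> Y + \<nu> (- Y)" by (rule add[rule_format]) blast
  have "Y \<union> - Y = UNIV" by blast
  with 1 u Y have z: "\<nu> (- Y) = 0" by simp
  have 2: "\<nu> ((X - Y) \<union> (- Y - X)) = \<nu> (X - Y) + \<nu> (- Y - X)" by (rule add[rule_format]) blast
  have "(X - Y) \<union> (- Y - X) = - Y" by blast
  with 2 z nn have z2: "\<nu> (X - Y) = 0" by (metis add_nonneg_eq_0_iff)
  have 3: "\<nu> ((X \<inter> Y) \<union> (X - Y)) = \<nu> (X \<inter> Y) + \<nu> (X - Y)" by (rule add[rule_format]) blast
  have "(X \<inter> Y) \<union> (X - Y) = X" by blast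
  with 3 z2 show ?thesis by simp
qed

lemma amen_dom:
  fixes \<nu> :: "'a set \<Rightarrow> real" and m :: "'a \<Rightarrow> 'a \<Rightarrow> 'a"
  assumes nn: "\<forall>B. 0 \<le> \<nu> B" and u: "\<nu> UNIV = 1"
    and add: "\<forall>B C. B \<inter> C = {} \<longrightarrow> \<nu> (B \<union> C) = \<nu> B + \<nu> C"
    and inv: "\<forall>t B. \<nu> {r. m t r \<in> B} = \<nu> B"
    and assoc: "\<forall>x y z. m (m x y) z = m x (m y z)"
    and aba: "m (m a b) a = a"
  shows "\<nu> (m a ` C) = \<nu> (m (m b a) ` C)"
proof -
  have as: "\<And>x y z. m (m x y) z = m x (m y z)" using assoc by blast
  have aba1: "m a (m b a) = a" using aba as by simp
  have aba2: "\<And>z. m a (m b (m a z)) = m a z"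
  proof -
    fix z have "m a (m b (m a z)) = m (m a (m b a)) z" using as by simp
    thus "m a (m b (m a z)) = m a z" using aba1 by simp
  qed
  define e where "e = m b a"
  have ee: "\<And>z. m e (m e z) = m e z" unfolding e_def using as aba2 by simp
  have ae: "\<And>z. m a (m e z) = m a z" unfolding e_def using as aba2 by simp
  define R where "R = range (m e)"
  have "{r. m e r \<in> R} = UNIV" unfolding R_def by auto
  hence R1: "\<nu> R = 1" using inv u by metis
  define D where "D = m e ` C"
  have aD: "m a ` D = m a ` C" unfolding D_def image_image
    using ae by simp
  have DR: "D \<subseteq> R" unfolding D_def R_def by auto
  have key: "{r. m a r \<in> m a ` D} \<inter> R = D"
  proof
    show "D \<subseteq> {r. m a r \<in> m a ` D} \<inter> R" using DR by auto
  next
    show "{r. m a r \<in> m a ` D} \<inter> R \<subseteq> D"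
    proof
      fix r assume "r \<in> {r. m a r \<in> m a ` D} \<inter> R"
      then obtain d z where d: "d \<in> D" "m a r = m a d" and z: "r = m e z"
        unfolding R_def by auto
      from d obtain c where c: "d = m e c" unfolding D_def by auto
      have 1: "m e r = r" using z ee by simp
      have 2: "m e r = m b (m a r)" unfolding e_def using as by simp
      have 3: "m e d = d" using c ee by simp
      have 4: "m e d = m b (m a d)" unfolding e_def using as by simp
      have "r = d" using 1 2 3 4 d(2) by simp
      with d show "r \<in> D" by simp
    qed
  qed
  have "\<nu> (m a ` C) = \<nu> (m a ` D)" using aD by simp
  also have "\<dots> = \<nu> {r. m a r \<in> m a ` D}" using inv by simp
  also have "\<dots> = \<nu> ({r. m a r \<in> m a ` D} \<inter> R)"
    using meas_restrict[OF nn u add R1] by blast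
  also have "\<dots> = \<nu> D" using key by simp
  finally show ?thesis unfolding D_def e_def .
qed

lemma sm_Inr_right: "\<exists>z. sum_mult mA mN w (Inr x) = Inr z"
  by (cases w) auto

lemma sm_Inr_left: "\<exists>z. sum_mult mA mN (Inr x) w = Inr z"
  by (cases w) auto

lemma sum_isg:
  fixes mA :: "'a \<Rightarrow> 'a \<Rightarrow> 'a" and mN :: "'b \<Rightarrow> 'b \<Rightarrow> 'b"
  assumes A: "inverse_semigroup mA" and N: "inverse_semigroup mN"
  shows "inverse_semigroup (sum_mult mA mN)"
  unfolding inverse_semigroup_def
proof (intro conjI allI)
  fix x y z :: "'a + 'b"
  have aA: "\<forall>x y z. mA (mA x y) z = mA x (mA y z)" using A unfolding inverse_semigroup_def by blast
  have aN: "\<forall>x y z. mN (mN x y) z = mN x (mN y z)" using N unfolding inverse_semigroup_def by blast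
  show "sum_mult mA mN (sum_mult mA mN x y) z = sum_mult mA mN x (sum_mult mA mN y z)"
    using aA aN by (cases x; cases y; cases z) auto
next
  fix s :: "'a + 'b"
  let ?m = "sum_mult mA mN"
  show "\<exists>!t. ?m (?m s t) s = s \<and> ?m (?m t s) t = t"
  proof (cases s)
    case (Inl a)
    have ex: "\<exists>!t. mA (mA a t) a = a \<and> mA (mA t a) t = t"
      using A unfolding inverse_semigroup_def by blast
    obtain b where b: "mA (mA a b) a = a \<and> mA (mA b a) b = b"
      and bu': "\<forall>t. mA (mA a t) a = a \<and> mA (mA t a) t = t \<longrightarrow> t = b"
      using ex1E[OF ex] by blast
    have bu: "\<And>t. mA (mA a t) a = a \<and> mA (mA t a) t = t \<Longrightarrow> t = b"
      using bu' by blast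
    show ?thesis
    proof (rule ex1I[of _ "Inl b"])
      show "?m (?m s (Inl b)) s = s \<and> ?m (?m (Inl b) s) (Inl b) = Inl b" using Inl b by simp
    next
      fix t assume t: "?m (?m s t) s = s \<and> ?m (?m t s) t = t"
      show "t = Inl b"
      proof (cases t)
        case (Inl c)
        have "mA (mA a c) a = a \<and> mA (mA c a) c = c" using t \<open>s = Inl a\<close> Inl by simp
        hence "c = b" by (rule bu)
        thus ?thesis using Inl by simp
      next
        case (Inr y) thus ?thesis using t \<open>s = Inl a\<close> by simp
      qed
    qed
  next
    case (Inr a)
    have ex: "\<exists>!t. mN (mN a t) a = a \<and> mN (mN t a) t = t"
      using N unfolding inverse_semigroup_def by blast
    obtain b where b: "mN (mN a b) a = a \<and> mN (mN b a) b = b"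
      and bu': "\<forall>t. mN (mN a t) a = a \<and> mN (mN t a) t = t \<longrightarrow> t = b"
      using ex1E[OF ex] by blast
    have bu: "\<And>t. mN (mN a t) a = a \<and> mN (mN t a) t = t \<Longrightarrow> t = b"
      using bu' by blast
    show ?thesis
    proof (rule ex1I[of _ "Inr b"])
      show "?m (?m s (Inr b)) s = s \<and> ?m (?m (Inr b) s) (Inr b) = Inr b" using Inr b by simp
    next
      fix t assume t: "?m (?m s t) s = s \<and> ?m (?m t s) t = t"
      show "t = Inr b"
      proof (cases t)
        case (Inr c)
        have "mN (mN a c) a = a \<and> mN (mN c a) c = c" using t \<open>s = Inr a\<close> Inr by simp
        hence "c = b" by (rule bu)
        thus ?thesis using Inr by simp
      next
        case (Inl y) thus ?thesis using t \<open>s = Inr a\<close> by simp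
      qed
    qed
  qed
qed

lemma sum_not_amen:
  fixes mA :: "'a \<Rightarrow> 'a \<Rightarrow> 'a" and mN :: "'b \<Rightarrow> 'b \<Rightarrow> 'b"
  assumes "\<not> amenable mN"
  shows "\<not> amenable (sum_mult mA mN)"
proof
  assume "amenable (sum_mult mA mN)"
  then obtain \<mu> :: "('a + 'b) set \<Rightarrow> real" where nn: "\<forall>B. 0 \<le> \<mu> B" and u: "\<mu> UNIV = 1"
    and add: "\<forall>B C. B \<inter> C = {} \<longrightarrow> \<mu> (B \<union> C) = \<mu> B + \<mu> C"
    and inv: "\<forall>t B. \<mu> {r. sum_mult mA mN t r \<in> B} = \<mu> B"
    unfolding amenable_def by blast
  have U: "{r. sum_mult mA mN (Inr undefined) r \<in> range Inr} = UNIV"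
  proof (rule set_eqI)
    fix r :: "'a + 'b" show "r \<in> {r. sum_mult mA mN (Inr undefined) r \<in> range Inr} \<longleftrightarrow> r \<in> UNIV"
      by (cases r) auto
  qed
  have "\<mu> {r. sum_mult mA mN (Inr undefined) r \<in> range Inr} = \<mu> (range Inr)" using inv by blast
  hence RN: "\<mu> (range Inr) = 1" using U u by simp
  have "\<mu> (range Inl \<union> range Inr) = \<mu> (range Inl) + \<mu> (range Inr)" by (rule add[rule_format]) auto
  moreover have "range Inl \<union> range Inr = (UNIV :: ('a + 'b) set)"
  proof (rule set_eqI)
    fix r :: "'a + 'b" show "r \<in> range Inl \<union> range Inr \<longleftrightarrow> r \<in> UNIV" by (cases r) auto
  qed
  ultimately have L0: "\<mu> (range Inl) = 0" using RN u by simp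
  define \<nu> where "\<nu> C = \<mu> (Inr ` C)" for C :: "'b set"
  have "amenable mN" unfolding amenable_def
  proof (intro exI[of _ \<nu>] conjI allI impI)
    fix B show "0 \<le> \<nu> B" using nn \<nu>_def by simp
  next
    show "\<nu> UNIV = 1" using RN \<nu>_def by simp
  next
    fix B C :: "'b set" assume "B \<inter> C = {}"
    hence "Inr ` B \<inter> Inr ` C = ({} :: ('a+'b) set)" by auto
    hence "\<mu> (Inr ` B \<union> Inr ` C) = \<mu> (Inr ` B) + \<mu> (Inr ` C)" by (rule add[rule_format])
    thus "\<nu> (B \<union> C) = \<nu> B + \<nu> C" unfolding \<nu>_def image_Un .
  next
    fix t B
    let ?P = "{r. sum_mult mA mN (Inr t) r \<in> Inr ` B}"
    have inv': "\<mu> ?P = \<mu> (Inr ` B)" using inv by blast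
    show "\<nu> {r. mN t r \<in> B} = \<nu> B"
    proof (cases "t \<in> B")
      case True
      have "?P = range Inl \<union> Inr ` {r. mN t r \<in> B}"
      proof (rule set_eqI)
        fix r show "r \<in> ?P \<longleftrightarrow> r \<in> range Inl \<union> Inr ` {r. mN t r \<in> B}"
          using True by (cases r) auto
      qed
      moreover have "\<mu> (range Inl \<union> Inr ` {r. mN t r \<in> B}) = \<mu> (range Inl) + \<mu> (Inr ` {r. mN t r \<in> B})"
        by (rule add[rule_format]) auto
      ultimately show ?thesis using inv' L0 \<nu>_def by simp
    next
      case False
      have "?P = Inr ` {r. mN t r \<in> B}"
      proof (rule set_eqI)
        fix r show "r \<in> ?P \<longleftrightarrow> r \<in> Inr ` {r. mN t r \<in> B}"
          using False by (cases r) auto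
      qed
      thus ?thesis using inv' \<nu>_def by simp
    qed
  qed
  with assms show False by simp
qed


lemma Inl_part_Inl: "{x. Inl x \<in> sum_mult mA mN (Inl c) ` B} = mA c ` {x. Inl x \<in> B}"
proof
  show "{x. Inl x \<in> sum_mult mA mN (Inl c) ` B} \<subseteq> mA c ` {x. Inl x \<in> B}"
  proof
    fix x assume "x \<in> {x. Inl x \<in> sum_mult mA mN (Inl c) ` B}"
    then obtain w where w: "w \<in> B" "Inl x = sum_mult mA mN (Inl c) w" by auto
    show "x \<in> mA c ` {x. Inl x \<in> B}"
    proof (cases w)
      case (Inl d) thus ?thesis using w by auto
    next
      case (Inr d) thus ?thesis using w by auto
    qed
  qed
next
  show "mA c ` {x. Inl x \<in> B} \<subseteq> {x. Inl x \<in> sum_mult mA mN (Inl c) ` B}"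
    by (auto intro: image_eqI[where x="Inl _"])
qed

lemma Inl_part_Inr: "{y. Inl y \<in> sum_mult mA mN (Inr c) ` B} = {}"
  using sm_Inr_left by (metis (no_types, lifting) Collect_empty_eq Inl_Inr_False imageE)

lemma sum_dom:
  fixes mA :: "'a \<Rightarrow> 'a \<Rightarrow> 'a" and mN :: "'b \<Rightarrow> 'b \<Rightarrow> 'b"
  assumes A: "inverse_semigroup mA" and N: "inverse_semigroup mN" and am: "amenable mA"
  shows "domain_measurable (sum_mult mA mN)"
proof -
  obtain \<nu> :: "'a set \<Rightarrow> real" where nn: "\<forall>B. 0 \<le> \<nu> B" and u: "\<nu> UNIV = 1"
    and add: "\<forall>B C. B \<inter> C = {} \<longrightarrow> \<nu> (B \<union> C) = \<nu> B + \<nu> C"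
    and inv: "\<forall>t B. \<nu> {r. mA t r \<in> B} = \<nu> B"
    using am unfolding amenable_def by blast
  have aA: "\<forall>x y z. mA (mA x y) z = mA x (mA y z)" using A unfolding inverse_semigroup_def by blast
  have S: "inverse_semigroup (sum_mult mA mN)" using sum_isg[OF A N] .
  let ?m = "sum_mult mA mN"
  define \<mu> where "\<mu> B = ennreal (\<nu> {x. Inl x \<in> B})" for B :: "('a + 'b) set"
  show ?thesis unfolding domain_measurable_def
  proof (intro exI[of _ \<mu>] conjI allI impI)
    show "\<mu> UNIV = 1" using u \<mu>_def by simp
  next
    fix B C :: "('a+'b) set" assume "B \<inter> C = {}"
    hence d: "{x. Inl x \<in> B} \<inter> {x. Inl x \<in> C} = {}" by auto
    have eq: "{x. Inl x \<in> B \<union> C} = {x. Inl x \<in> B} \<union> {x. Inl x \<in> C}" by auto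
    have e: "\<nu> {x. Inl x \<in> B \<union> C} = \<nu> {x. Inl x \<in> B} + \<nu> {x. Inl x \<in> C}"
      unfolding eq using d by (rule add[rule_format])
    show "\<mu> (B \<union> C) = \<mu> B + \<mu> C" unfolding \<mu>_def e
      using nn ennreal_plus by blast
  next
    fix s B
    define tt where "tt = isg_inv ?m s"
    have t: "?m (?m s tt) s = s \<and> ?m (?m tt s) tt = tt"
    proof -
      have ex1: "\<exists>!t. ?m (?m s t) s = s \<and> ?m (?m t s) t = t"
        using S unfolding inverse_semigroup_def by blast
      show ?thesis unfolding isg_inv_def tt_def by (rule theI'[OF ex1])
    qed
    have goal: "\<mu> (?m (?m tt s) ` B) = \<mu> (?m s ` B)"
    proof (cases s)
      case (Inl a)
      show ?thesis
      proof (cases tt)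
        case (Inl b)
        have aba: "mA (mA a b) a = a" using t \<open>s = Inl a\<close> Inl by simp
        have ts: "?m tt (Inl a) = Inl (mA b a)" using Inl by simp
        have "\<nu> (mA a ` {x. Inl x \<in> B}) = \<nu> (mA (mA b a) ` {x. Inl x \<in> B})"
          by (rule amen_dom[OF nn u add inv aA aba])
        thus ?thesis unfolding \<open>s = Inl a\<close> ts \<mu>_def Inl_part_Inl by simp
      next
        case (Inr y)
        then show ?thesis using t \<open>s = Inl a\<close> by simp
      qed
    next
      case (Inr x)
      obtain z where z: "?m tt (Inr x) = Inr z" using sm_Inr_right by metis
      show ?thesis unfolding Inr z \<mu>_def Inl_part_Inr ..
    qed
    thus "\<mu> (?m (?m (isg_inv ?m s) s) ` B) = \<mu> (?m s ` B)" unfolding tt_def .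
  qed
qed

theorem mainTheorem19:
  fixes mA :: "'a::countable \<Rightarrow> 'a \<Rightarrow> 'a" and mN :: "'n::countable \<Rightarrow> 'n \<Rightarrow> 'n"
  assumes "inverse_semigroup mA" and "unital mA" and "amenable mA"
    and "inverse_semigroup mN" and "\<not> amenable mN"
  shows "inverse_semigroup (sum_mult mA mN) \<and> \<not> amenable (sum_mult mA mN)
         \<and> domain_measurable (sum_mult mA mN)"
  using sum_isg[OF assms(1,4)] sum_not_amen[OF assms(5)] sum_dom[OF assms(1,4,3)] by blast

end
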